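(* If a graph $G$ with at least two vertices belongs to $\mathcal{S}_3$, then $|E(G)|\ge 3|V(G)|-2$.
   Context: Graphs may have parallel edges but no loops. $G\in\mathcal{S}_3$ means: for every $\beta:V(G)\to\mathbb{Z}_3$ with $\sum_v\beta(v)\equiv0\pmod3$ there is a strongly-connected orientation $D$ of $G$ with $d^+_D(v)-d^-_D(v)\equiv\beta(v)\pmod3$ for all $v$. *)

theory Defs
  imports Main
begin

text \<open>A finite loopless multigraph: vertex set V, edge set E (edges are abstract
  objects, so parallel edges are allowed), and ends e = (x, y) gives the two
  distinct endpoints of edge e.\<close>
definition multigraph :: "'a set \<Rightarrow> 'e set \<Rightarrow> ('e \<Rightarrow> 'a \<times> 'a) \<Rightarrow> bool" where
  "multigraph V E ends \<longleftrightarrow> finite V \<and> finite E \<and>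
     (\<forall>e\<in>E. fst (ends e) \<in> V \<and> snd (ends e) \<in> V \<and> fst (ends e) \<noteq> snd (ends e))"

definition orientation :: "'e set \<Rightarrow> ('e \<Rightarrow> 'a \<times> 'a) \<Rightarrow> ('e \<Rightarrow> 'a \<times> 'a) \<Rightarrow> bool" where
  "orientation E ends D \<longleftrightarrow> (\<forall>e\<in>E. D e = ends e \<or> D e = prod.swap (ends e))"

definition outdeg :: "'e set \<Rightarrow> ('e \<Rightarrow> 'a \<times> 'a) \<Rightarrow> 'a \<Rightarrow> nat" where
  "outdeg E D v = card {e\<in>E. fst (D e) = v}"

definition indeg :: "'e set \<Rightarrow> ('e \<Rightarrow> 'a \<times> 'a) \<Rightarrow> 'a \<Rightarrow> nat" where
  "indeg E D v = card {e\<in>E. snd (D e) = v}"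

definition strongly_connected :: "'a set \<Rightarrow> 'e set \<Rightarrow> ('e \<Rightarrow> 'a \<times> 'a) \<Rightarrow> bool" where
  "strongly_connected V E D \<longleftrightarrow> (\<forall>u\<in>V. \<forall>v\<in>V. (u, v) \<in> (D ` E)\<^sup>*)"

text \<open>Membership in S_3; Z_3-valued functions are represented by integers modulo 3.\<close>
definition in_S3 :: "'a set \<Rightarrow> 'e set \<Rightarrow> ('e \<Rightarrow> 'a \<times> 'a) \<Rightarrow> bool" where
  "in_S3 V E ends \<longleftrightarrow>
     (\<forall>\<beta> :: 'a \<Rightarrow> int. (\<Sum>v\<in>V. \<beta> v) mod 3 = 0 \<longrightarrow>
        (\<exists>D. orientation E ends D \<and> strongly_connected V E D \<and>
             (\<forall>v\<in>V. (int (outdeg E D v) - int (indeg E D v)) mod 3 = \<beta> v mod 3)))"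

end

theory Submission
  imports Defs
begin

lemma mod_a: "(2 * (m mod 3) - 2 * (m::int)) mod 3 = 0" by presburger
lemma mod_b: "(2 * (x::int) - d) mod 3 = (2 * c - d) mod 3 \<Longrightarrow> x mod 3 = c mod 3" by presburger
lemma mod_c: "(x::int) mod 3 = 0 \<Longrightarrow> x \<ge> 1 \<Longrightarrow> x \<ge> 3" by presburger

lemma fiber_sum:
  assumes "finite E" "finite V" "f ` E \<subseteq> V"
  shows "(\<Sum>v\<in>V. card {e\<in>E. f e = v}) = card E"
proof -
  have "(\<Sum>v\<in>V. \<Sum>e\<in>{e\<in>E. f e = v}. (1::nat)) = (\<Sum>e\<in>E. 1)"
    by (rule sum.group[OF assms])
  then show ?thesis by simp
qed

definition deg :: "'e set \<Rightarrow> ('e \<Rightarrow> 'a \<times> 'a) \<Rightarrow> 'a \<Rightarrow> nat" where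
  "deg E ends v = card {e\<in>E. fst (ends e) = v \<or> snd (ends e) = v}"

lemma out_in_deg:
  assumes "multigraph V E ends" "orientation E ends D"
  shows "outdeg E D v + indeg E D v = deg E ends v"
proof -
  have fin: "finite E" using assms(1) by (simp add: multigraph_def)
  have disj: "{e\<in>E. fst (D e) = v} \<inter> {e\<in>E. snd (D e) = v} = {}"
  proof (rule ccontr)
    assume "{e\<in>E. fst (D e) = v} \<inter> {e\<in>E. snd (D e) = v} \<noteq> {}"
    then obtain e where e: "e \<in> E" "fst (D e) = v" "snd (D e) = v" by blast
    have "fst (ends e) \<noteq> snd (ends e)" using assms(1) e(1) by (simp add: multigraph_def)
    moreover have "D e = ends e \<or> D e = prod.swap (ends e)" using assms(2) e(1) by (simp add: orientation_def)
    ultimately show False using e by (cases "ends e") auto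
  qed
  have un: "{e\<in>E. fst (D e) = v} \<union> {e\<in>E. snd (D e) = v} = {e\<in>E. fst (ends e) = v \<or> snd (ends e) = v}"
  proof -
    have "\<And>e. e \<in> E \<Longrightarrow> (fst (D e) = v \<or> snd (D e) = v) = (fst (ends e) = v \<or> snd (ends e) = v)"
    proof -
      fix e assume "e \<in> E"
      then have "D e = ends e \<or> D e = prod.swap (ends e)" using assms(2) by (simp add: orientation_def)
      then show "(fst (D e) = v \<or> snd (D e) = v) = (fst (ends e) = v \<or> snd (ends e) = v)"
        by (cases "ends e") auto
    qed
    then show ?thesis by blast
  qed
  show ?thesis unfolding outdeg_def indeg_def deg_def
    using card_Un_disjoint[of "{e\<in>E. fst (D e) = v}" "{e\<in>E. snd (D e) = v}"] fin disj un
    by simp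
qed

lemma sum_outdeg:
  assumes "multigraph V E ends" "orientation E ends D"
  shows "(\<Sum>v\<in>V. outdeg E D v) = card E"
proof -
  have "(\<lambda>e. fst (D e)) ` E \<subseteq> V"
  proof
    fix x assume "x \<in> (\<lambda>e. fst (D e)) ` E"
    then obtain e where e: "e \<in> E" "x = fst (D e)" by blast
    have "D e = ends e \<or> D e = prod.swap (ends e)" using assms(2) e(1) by (simp add: orientation_def)
    then show "x \<in> V" using assms(1) e by (cases "ends e") (auto simp: multigraph_def)
  qed
  then show ?thesis unfolding outdeg_def
    using fiber_sum[of E V "\<lambda>e. fst (D e)"] assms(1) by (simp add: multigraph_def)
qed

lemma sum_deg:
  assumes "multigraph V E ends"
  shows "(\<Sum>v\<in>V. int (deg E ends v)) = 2 * int (card E)"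
proof -
  have o: "orientation E ends ends" by (simp add: orientation_def)
  have "(\<Sum>v\<in>V. int (deg E ends v)) = (\<Sum>v\<in>V. int (outdeg E ends v)) + (\<Sum>v\<in>V. int (indeg E ends v))"
    using out_in_deg[OF assms o] by (simp add: sum.distrib[symmetric] flip: of_nat_add)
  moreover have "(\<Sum>v\<in>V. outdeg E ends v) = card E" by (rule sum_outdeg[OF assms o])
  moreover have "(\<Sum>v\<in>V. indeg E ends v) = card E"
  proof -
    have "snd ` ends ` E \<subseteq> V" using assms by (auto simp: multigraph_def)
    then show ?thesis unfolding indeg_def
      using fiber_sum[of E V "\<lambda>e. snd (ends e)"] assms by (auto simp: multigraph_def image_image)
  qed
  ultimately show ?thesis
    by (metis mult_2 of_nat_add of_nat_sum)
qed

theorem mainTheorem7: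
  fixes V :: "'a set" and E :: "'e set" and ends :: "'e \<Rightarrow> 'a \<times> 'a"
  assumes "multigraph V E ends"
    and "card V \<ge> 2"
    and "in_S3 V E ends"
  shows "int (card E) \<ge> 3 * int (card V) - 2"
proof -
  have finV: "finite V" using assms(1) by (simp add: multigraph_def)
  have "V \<noteq> {}" using assms(2) by auto
  then obtain w where w: "w \<in> V" by blast
  define c :: "'a \<Rightarrow> int" where "c v = (if v = w then int (card E) mod 3 else 0)" for v
  define \<beta> :: "'a \<Rightarrow> int" where "\<beta> v = 2 * c v - int (deg E ends v)" for v
  have sc: "(\<Sum>v\<in>V. c v) = int (card E) mod 3"
    unfolding c_def using finV w by (simp add: sum.delta)
  have "(\<Sum>v\<in>V. \<beta> v) = 2 * (int (card E) mod 3) - 2 * int (card E)"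
    unfolding \<beta>_def using sc sum_deg[OF assms(1)]
    by (simp add: sum_subtractf sum_distrib_left[symmetric])
  then have "(\<Sum>v\<in>V. \<beta> v) mod 3 = 0" using mod_a by simp
  then obtain D where D: "orientation E ends D" "strongly_connected V E D"
    "\<And>v. v\<in>V \<Longrightarrow> (int (outdeg E D v) - int (indeg E D v)) mod 3 = \<beta> v mod 3"
  proof -
    have h: "\<forall>\<beta>' :: 'a \<Rightarrow> int. (\<Sum>v\<in>V. \<beta>' v) mod 3 = 0 \<longrightarrow>
        (\<exists>D. orientation E ends D \<and> strongly_connected V E D \<and>
             (\<forall>v\<in>V. (int (outdeg E D v) - int (indeg E D v)) mod 3 = \<beta>' v mod 3))"
      using assms(3) unfolding in_S3_def .
    have "\<exists>D. orientation E ends D \<and> strongly_connected V E D \<and>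
         (\<forall>v\<in>V. (int (outdeg E D v) - int (indeg E D v)) mod 3 = \<beta> v mod 3)"
      using spec[OF h, of \<beta>] \<open>(\<Sum>v\<in>V. \<beta> v) mod 3 = 0\<close> by (rule mp)
    then show ?thesis using that by blast
  qed
  have pos: "outdeg E D v \<ge> 1" if v: "v \<in> V" for v
  proof -
    obtain u where u: "u \<in> V" "u \<noteq> v"
    proof -
      have "V - {v} \<noteq> {}"
      proof
        assume "V - {v} = {}"
        then have "V = {v}" using v by blast
        then show False using assms(2) by simp
      qed
      then show ?thesis using that by blast
    qed
    have "(v, u) \<in> (D ` E)\<^sup>*" using D(2) v u unfolding strongly_connected_def by blast
    then obtain y where "(v, y) \<in> D ` E"
      using u(2) by (metis converse_rtranclE)
    then obtain e where e: "e \<in> E" "D e = (v, y)" by (metis imageE)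
    have "finite {e\<in>E. fst (D e) = v}" using assms(1) by (simp add: multigraph_def)
    moreover have "e \<in> {e\<in>E. fst (D e) = v}" using e by simp
    ultimately show ?thesis unfolding outdeg_def
      by (metis One_nat_def Suc_leI card_gt_0_iff empty_iff)
  qed
  have cong: "int (outdeg E D v) mod 3 = c v mod 3" if v: "v \<in> V" for v
  proof -
    have "int (indeg E D v) = int (deg E ends v) - int (outdeg E D v)"
      using out_in_deg[OF assms(1) D(1)] by (metis add_diff_cancel_left' of_nat_add)
    then have "(2 * int (outdeg E D v) - int (deg E ends v)) mod 3 = (2 * c v - int (deg E ends v)) mod 3"
      using D(3)[OF v] unfolding \<beta>_def by simp
    then show ?thesis by (rule mod_b)
  qed
  have ge3: "int (outdeg E D v) \<ge> 3" if v: "v \<in> V" "v \<noteq> w" for v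
  proof -
    have "int (outdeg E D v) mod 3 = 0" using cong[OF v(1)] v(2) by (simp add: c_def)
    moreover have "int (outdeg E D v) \<ge> 1" using pos[OF v(1)] by simp
    ultimately show ?thesis by (rule mod_c)
  qed
  have e1: "int (card E) = (\<Sum>v\<in>V. int (outdeg E D v))"
    using sum_outdeg[OF assms(1) D(1)] by (metis of_nat_sum)
  have e2: "(\<Sum>v\<in>V. int (outdeg E D v)) = int (outdeg E D w) + (\<Sum>v\<in>V-{w}. int (outdeg E D v))"
    using finV w by (simp add: sum.remove)
  have e3: "(\<Sum>v\<in>V-{w}. int (outdeg E D v)) \<ge> (\<Sum>v\<in>V-{w}. 3)"
    by (rule sum_mono) (use ge3 in auto)
  have "int (card E) \<ge> int (outdeg E D w) + 3 * int (card (V - {w}))"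
    using e1 e2 e3 by simp
  moreover have "int (card (V - {w})) = int (card V) - 1" using finV w assms(2) by (simp add: of_nat_diff)
  moreover have "int (outdeg E D w) \<ge> 1" using pos[OF w] by simp
  ultimately show ?thesis by linarith
qed

end
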